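(* Let $A\in\mathbb{R}^{n\times n}$, $C\in\mathbb{R}^{p\times n}$ and $K\in\mathbb{N}$, and let $$\mathcal{O}_K=\begin{bmatrix} C^\top & (CA)^\top & \cdots & (CA^{K-1})^\top\end{bmatrix}^\top\in\mathbb{R}^{pK\times n}.$$ Assume $\mathcal{O}_K$ has full column rank, set $\mathcal{W}_o:=\mathcal{O}_K^\top\mathcal{O}_K$, let $\Sigma_v\in\mathbb{R}^{n\times n}$ with $\Sigma_v\succ 0$, and define $M:=\mathcal{O}_K\mathcal{W}_o^{-1}\mathcal{O}_K^\top$ and $N:=\Sigma_v^{-1/2}\mathcal{W}_o^{-1}\mathcal{O}_K^\top$. Consider the optimization problem $$\max_{R\in\mathbb{R}^{pK\times pK},\ \beta\in\mathbb{R}^+}\ \beta\quad\text{subject to}\quad N^\top N+R-MRM\succeq \beta I_{pK}.$$ The optimal value of the objective function is $\beta_{\mathrm{opt}}=\lambda_{\min}(\Sigma_v^{-1}\mathcal{W}_o^{-1})$.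
   Context: $\Sigma_v^{-1/2}$ denotes the symmetric positive definite square root of $\Sigma_v^{-1}$. $\mathbb{R}^+$ denotes the positive reals. $Y\succeq \beta I$ means $Y-\beta I$ is symmetric positive semidefinite. $\lambda_{\min}(\cdot)$ denotes the smallest eigenvalue (the eigenvalues of $\Sigma_v^{-1}\mathcal{W}_o^{-1}$ are real and positive). *)

theory Defs
  imports "Jordan_Normal_Form.Matrix" "Jordan_Normal_Form.Gauss_Jordan_Elimination"
          "Jordan_Normal_Form.Char_Poly" "Jordan_Normal_Form.DL_Rank"
begin

text \<open>Observability matrix O_K = [C; CA; ...; CA^(K-1)], of size (p*K) x n,
  where p = dim_row C and n = dim_col C. Row i is row (i mod p) of C * A^(i div p).\<close>
definition obs_mat :: "real mat \<Rightarrow> real mat \<Rightarrow> nat \<Rightarrow> real mat" where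
  "obs_mat A C K = mat (dim_row C * K) (dim_col C)
     (\<lambda>(i, j). (C * A ^\<^sub>m (i div dim_row C)) $$ (i mod dim_row C, j))"

definition psd_mat :: "real mat \<Rightarrow> bool" where
  "psd_mat Y \<longleftrightarrow> Y \<in> carrier_mat (dim_row Y) (dim_row Y) \<and> transpose_mat Y = Y \<and>
     (\<forall>x \<in> carrier_vec (dim_row Y). x \<bullet> (Y *\<^sub>v x) \<ge> 0)"

definition pd_mat :: "real mat \<Rightarrow> bool" where
  "pd_mat Y \<longleftrightarrow> Y \<in> carrier_mat (dim_row Y) (dim_row Y) \<and> transpose_mat Y = Y \<and>
     (\<forall>x \<in> carrier_vec (dim_row Y). x \<noteq> 0\<^sub>v (dim_row Y) \<longrightarrow> x \<bullet> (Y *\<^sub>v x) > 0)"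

definition psd_ge :: "real mat \<Rightarrow> real \<Rightarrow> bool" where
  "psd_ge Y \<beta> \<longleftrightarrow> psd_mat (Y - \<beta> \<cdot>\<^sub>m 1\<^sub>m (dim_row Y))"

definition minv :: "real mat \<Rightarrow> real mat" where
  "minv X = the (mat_inverse X)"

definition pd_sqrt :: "real mat \<Rightarrow> real mat" where
  "pd_sqrt S = (THE R. R \<in> carrier_mat (dim_row S) (dim_row S) \<and> pd_mat R \<and> R * R = S)"

definition lambda_min :: "real mat \<Rightarrow> real" where
  "lambda_min X = Min {k. eigenvalue X k}"

end

theory Submission
  imports Defs
begin

lemma sq_nonneg_vec: "0 \<le> (v::real vec) \<bullet> v"
  unfolding scalar_prod_def by (intro sum_nonneg) auto

lemma sq_zero_vec: assumes "v \<in> carrier_vec n" "(v::real vec) \<bullet> v = 0" shows "v = 0\<^sub>v n"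
proof (rule eq_vecI)
  have "\<forall>i\<in>{0..<n}. v $ i * v $ i = 0"
    using assms unfolding scalar_prod_def by (subst sum_nonneg_eq_0_iff[symmetric]) auto
  then show "\<And>i. i < dim_vec (0\<^sub>v n) \<Longrightarrow> v $ i = 0\<^sub>v n $ i" by auto
  show "dim_vec v = dim_vec (0\<^sub>v n)" using assms by auto
qed

lemma sq_pos_vec: assumes "v \<in> carrier_vec n" "(v::real vec) \<noteq> 0\<^sub>v n" shows "0 < v \<bullet> v"
  using sq_nonneg_vec[of v] sq_zero_vec[OF assms(1)] assms(2) by force

lemma minv_props: assumes A: "A \<in> carrier_mat n n"
  and inj: "\<And>v. v \<in> carrier_vec n \<Longrightarrow> A *\<^sub>v v = 0\<^sub>v n \<Longrightarrow> v = 0\<^sub>v n"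
  shows "minv A \<in> carrier_mat n n \<and> A * minv A = 1\<^sub>m n \<and> minv A * A = 1\<^sub>m n"
proof -
  have "det A \<noteq> 0" using det_0_iff_vec_prod_zero_field[OF A] inj by auto
  from det_non_zero_imp_unit[OF A this, of "()"]
  have U: "A \<in> Units (ring_mat TYPE(real) n ())" .
  have "mat_inverse A \<noteq> None"
  proof
    assume "mat_inverse A = None"
    from mat_inverse(1)[OF A this, of "()"] U show False by simp
  qed
  then obtain B where B: "mat_inverse A = Some B" by auto
  from mat_inverse(2)[OF A B] B show ?thesis unfolding minv_def by auto
qed

lemma sym_real_eig: fixes S :: "real mat"
  assumes S: "S \<in> carrier_mat n n" and sym: "transpose_mat S = S" and n: "0 < n"
  shows "\<exists>e v. v \<in> carrier_vec n \<and> v \<noteq> 0\<^sub>v n \<and> S *\<^sub>v v = e \<cdot>\<^sub>v v"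
proof -
  define Ac where "Ac = map_mat complex_of_real S"
  have Ac: "Ac \<in> carrier_mat n n" using S unfolding Ac_def by auto
  from char_poly_factorized[OF Ac] obtain as where cp: "char_poly Ac = (\<Prod>a\<leftarrow>as. [:- a, 1:])"
    and len: "length as = n" by auto
  from len n obtain a as' where as: "as = a # as'" by (cases as) auto
  have "poly (char_poly Ac) a = 0" unfolding cp as by simp
  hence "eigenvalue Ac a" using eigenvalue_root_char_poly[OF Ac] by simp
  then obtain v where ev: "eigenvector Ac v a" unfolding eigenvalue_def by auto
  hence v: "v \<in> carrier_vec n" and v0: "v \<noteq> 0\<^sub>v n" and Av: "Ac *\<^sub>v v = a \<cdot>\<^sub>v v"
    unfolding eigenvector_def using Ac by auto
  define s where "s = (\<Sum>i<n. \<Sum>j<n. cnj (v$i) * Ac$$(i,j) * v$j)"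
  define r where "r = (\<Sum>i<n. cnj (v$i) * v$i)"
  have row: "(\<Sum>j<n. Ac$$(i,j) * v$j) = a * v$i" if i: "i < n" for i
  proof -
    have "(Ac *\<^sub>v v) $ i = a * v$i" using Av i v by simp
    moreover have "(Ac *\<^sub>v v) $ i = (\<Sum>j<n. Ac$$(i,j) * v$j)"
      using i v Ac by (auto simp: scalar_prod_def row_def lessThan_atLeast0)
    ultimately show ?thesis by simp
  qed
  have "s = (\<Sum>i<n. cnj (v$i) * (\<Sum>j<n. Ac$$(i,j) * v$j))" unfolding s_def
    by (simp add: sum_distrib_left mult.assoc)
  also have "\<dots> = (\<Sum>i<n. a * (cnj(v$i) * v$i))" by (intro sum.cong) (auto simp: row)
  also have "\<dots> = a * r" by (simp add: r_def sum_distrib_left)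
  finally have s1: "s = a * r" .
  have "cnj s = (\<Sum>i<n. \<Sum>j<n. v$i * Ac$$(i,j) * cnj (v$j))"
    unfolding s_def using S by (auto simp: Ac_def intro!: sum.cong)
  also have "\<dots> = (\<Sum>j<n. \<Sum>i<n. v$i * Ac$$(i,j) * cnj (v$j))" by (rule sum.swap)
  also have "\<dots> = s" unfolding s_def
  proof (intro sum.cong refl)
    fix i j assume i: "i \<in> {..<n}" and j: "j \<in> {..<n}"
    have "S $$ (j,i) = S $$ (i,j)" using sym S i j
      by (metis carrier_matD index_transpose_mat(1) lessThan_iff)
    then show "v$j * Ac$$(j,i) * cnj (v$i) = cnj (v$i) * Ac$$(i,j) * v$j"
      using i j S by (simp add: Ac_def)
  qed
  finally have s2: "cnj s = s" .
  have rr: "cnj r = r" unfolding r_def by (simp add: ac_simps)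
  have r0: "r \<noteq> 0"
  proof
    assume "r = 0"
    hence "Re r = 0" by simp
    moreover have "Re r = (\<Sum>i<n. (cmod (v$i))^2)" unfolding r_def
      by (simp add: complex_mult_cnj cmod_def power2_eq_square)
    ultimately have "\<forall>i\<in>{..<n}. (cmod (v$i))^2 = 0" by (subst sum_nonneg_eq_0_iff[symmetric]) auto
    hence "v = 0\<^sub>v n" using v by (intro eq_vecI) auto
    with v0 show False by simp
  qed
  have "cnj a * r = a * r" using s1 s2 rr by (metis complex_cnj_mult)
  hence aa: "cnj a = a" using r0 by simp
  hence a_real: "a = complex_of_real (Re a)" using arg_cong[OF aa, of Im] by (simp add: complex_eq_iff)
  have "poly (char_poly Ac) (complex_of_real (Re a)) = 0" using \<open>poly (char_poly Ac) a = 0\<close> a_real by simp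
  hence "complex_of_real (poly (char_poly S) (Re a)) = 0"
    unfolding Ac_def of_real_hom.char_poly_hom[OF S] by (simp add: of_real_hom.poly_map_poly)
  hence "poly (char_poly S) (Re a) = 0" by simp
  hence "eigenvalue S (Re a)" using eigenvalue_root_char_poly[OF S] by simp
  then show ?thesis unfolding eigenvalue_def eigenvector_def using S by auto
qed

lemma householder: fixes u :: "real vec"
  assumes u: "u \<in> carrier_vec N" and uu: "u \<bullet> u = 1" and N: "0 < N"
  shows "\<exists>H \<in> carrier_mat N N. transpose_mat H = H \<and> H * H = 1\<^sub>m N \<and> H *\<^sub>v unit_vec N 0 = u"
proof -
  define w where "w = vec N (\<lambda>i. u$i - (if i = 0 then 1 else 0))"
  define c where "c = (\<Sum>k\<in>{0..<N}. w$k * w$k)"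
  define a where "a = 2 / c"
  define H where "H = mat N N (\<lambda>(i,j). (if i = j then 1 else 0) - a * w$i * w$j)"
  have H: "H \<in> carrier_mat N N" unfolding H_def by auto
  have HT: "transpose_mat H = H" unfolding H_def by (rule eq_matI) auto
  have ac: "a * a * c = 2 * a" unfolding a_def by (cases "c = 0") (auto simp: field_simps)
  have "H * H = 1\<^sub>m N"
  proof (rule eq_matI)
    fix i j assume i: "i < dim_row (1\<^sub>m N)" and j: "j < dim_col (1\<^sub>m N)"
    hence i: "i < N" and j: "j < N" by auto
    have "(H * H) $$ (i,j) = (\<Sum>k\<in>{0..<N}. H$$(i,k) * H$$(k,j))"
      using i j H by (auto simp: scalar_prod_def)
    also have "\<dots> = (\<Sum>k\<in>{0..<N}. (if k = i then H$$(k,j) else 0) - (if k = j then a*w$i*w$k else 0)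
        + a*a*w$i*w$j*(w$k*w$k))"
      by (rule sum.cong, insert i j, auto simp: H_def algebra_simps)
    also have "\<dots> = H$$(i,j) - a*w$i*w$j + a*a*c*w$i*w$j"
      using i j by (simp add: sum.distrib sum_subtractf sum.delta c_def sum_distrib_left algebra_simps)
    also have "\<dots> = 1\<^sub>m N $$ (i,j)" using i j unfolding ac by (simp add: H_def)
    finally show "(H * H) $$ (i,j) = 1\<^sub>m N $$ (i,j)" .
  qed (auto simp: H_def)
  have w0: "w$0 = u$0 - 1" unfolding w_def using N by simp
  have "c = (\<Sum>k\<in>{0..<N}. u$k*u$k - 2 * (if k = 0 then u$k else 0) + (if k = 0 then 1 else 0))"
    unfolding c_def by (rule sum.cong, auto simp: w_def algebra_simps)
  also have "\<dots> = 2 - 2 * u$0" using N uu u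
    by (simp add: sum.distrib sum_subtractf sum.delta scalar_prod_def flip: sum_distrib_left)
  finally have c2: "c = 2 - 2 * u$0" .
  have "H *\<^sub>v unit_vec N 0 = u"
  proof (rule eq_vecI)
    fix i assume "i < dim_vec u" hence i: "i < N" using u by auto
    have "(H *\<^sub>v unit_vec N 0) $ i = H $$ (i,0)" using i N H
      by (simp add: scalar_prod_right_unit)
    also have "\<dots> = u $ i"
    proof (cases "c = 0")
      case True
      hence "\<forall>k\<in>{0..<N}. w$k * w$k = 0" unfolding c_def by (subst sum_nonneg_eq_0_iff[symmetric]) auto
      hence "w$i = 0" using i by auto
      thus ?thesis using i N unfolding H_def w_def by auto
    next
      case False
      have aw: "a * w$0 = -1" unfolding a_def w0 using False c2 by (simp add: field_simps)
      have "H $$ (i,0) = (if i = 0 then 1 else 0) - w$i * (a * w$0)" using i N unfolding H_def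
        by (simp add: algebra_simps)
      hence "H $$ (i,0) = (if i = 0 then 1 else 0) + w$i" unfolding aw by simp
      thus ?thesis using i unfolding w_def by auto
    qed
    finally show "(H *\<^sub>v unit_vec N 0) $ i = u $ i" .
  qed (insert u H, auto)
  with H HT \<open>H * H = 1\<^sub>m N\<close> show ?thesis by blast
qed

lemma unit0_col: fixes A :: "real mat" assumes "A \<in> carrier_mat N N" "i < N" "0 < N"
  shows "(A *\<^sub>v unit_vec N 0) $ i = A $$ (i,0)"
proof -
  have "row A i \<in> carrier_vec N" using assms by auto
  from scalar_prod_right_unit[OF assms(3), of "row A i"] show ?thesis using assms by auto
qed

lemma spectral: fixes S :: "real mat"
  assumes "S \<in> carrier_mat n n" "transpose_mat S = S"
  shows "\<exists>Q D. Q \<in> carrier_mat n n \<and> D \<in> carrier_mat n n \<and> transpose_mat Q * Q = 1\<^sub>m n \<and>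
     Q * transpose_mat Q = 1\<^sub>m n \<and> diagonal_mat D \<and> S = Q * D * transpose_mat Q"
  using assms
proof (induction n arbitrary: S)
  case 0
  then show ?case
    by (intro exI[of _ "1\<^sub>m 0"] exI[of _ S]) (auto simp: diagonal_mat_def)
next
  case (Suc m S)
  define N where "N = Suc m"
  have S: "S \<in> carrier_mat N N" and Ssym: "transpose_mat S = S" using Suc.prems N_def by auto
  obtain e v0 where v0: "v0 \<in> carrier_vec N" "v0 \<noteq> 0\<^sub>v N" and Sv0: "S *\<^sub>v v0 = e \<cdot>\<^sub>v v0"
    using sym_real_eig[OF S Ssym] N_def by auto
  define u where "u = (1 / sqrt (v0 \<bullet> v0)) \<cdot>\<^sub>v v0"
  have pos: "0 < v0 \<bullet> v0" using sq_pos_vec[OF v0] .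
  have u: "u \<in> carrier_vec N" using v0 unfolding u_def by auto
  have uu: "u \<bullet> u = 1" unfolding u_def using v0 pos
    by (simp add: smult_scalar_prod_distrib[OF _ v0(1)] scalar_prod_smult_distrib[OF _ v0(1)])
  have Su: "S *\<^sub>v u = e \<cdot>\<^sub>v u" unfolding u_def using S v0 Sv0
    by (simp add: mult_mat_vec smult_smult_assoc mult.commute)
  obtain H where H: "H \<in> carrier_mat N N" and HT: "transpose_mat H = H" and HH: "H * H = 1\<^sub>m N"
    and He: "H *\<^sub>v unit_vec N 0 = u" using householder[OF u uu] N_def by auto
  define A' where "A' = H * S * H"
  have A': "A' \<in> carrier_mat N N" unfolding A'_def using H S by auto
  have A'T: "transpose_mat A' = A'"
  proof -
    have HS: "H * S \<in> carrier_mat N N" using H S by auto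
    have "transpose_mat A' = transpose_mat H * transpose_mat (H * S)" unfolding A'_def
      using transpose_mult[OF HS H] .
    also have "transpose_mat (H * S) = transpose_mat S * transpose_mat H" using transpose_mult[OF H S] .
    finally show ?thesis unfolding A'_def HT Ssym using H S by (simp add: assoc_mult_mat[of _ N N _ N _ N])
  qed
  have Hu: "H *\<^sub>v u = unit_vec N 0" using He[symmetric] H
    by (simp add: assoc_mult_mat_vec[symmetric, of _ N N _ N] HH)
  have A'e: "A' *\<^sub>v unit_vec N 0 = e \<cdot>\<^sub>v unit_vec N 0" unfolding A'_def using H S u
    by (simp add: assoc_mult_mat_vec[of _ N N _ N] He Su mult_mat_vec Hu)
  have col0: "A' $$ (i,0) = (if i = 0 then e else 0)" if "i < N" for i
    using arg_cong[OF A'e, of "\<lambda>x. x $ i"] unit0_col[OF A' that] that N_def by auto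
  have row0: "A' $$ (0,j) = (if j = 0 then e else 0)" if "j < N" for j
  proof -
    have "A' $$ (0,j) = transpose_mat A' $$ (j,0)" using that A' N_def by auto
    thus ?thesis using A'T col0[OF that] by simp
  qed
  define A3 where "A3 = mat m m (\<lambda>(i,j). A' $$ (i+1,j+1))"
  define E where "E = mat 1 1 (\<lambda>_. e)"
  have A3: "A3 \<in> carrier_mat m m" unfolding A3_def by auto
  have E: "E \<in> carrier_mat 1 1" unfolding E_def by auto
  have A'blk: "A' = four_block_mat E (0\<^sub>m 1 m) (0\<^sub>m m 1) A3"
  proof (rule eq_matI)
    fix i j assume "i < dim_row (four_block_mat E (0\<^sub>m 1 m) (0\<^sub>m m 1) A3)"
      "j < dim_col (four_block_mat E (0\<^sub>m 1 m) (0\<^sub>m m 1) A3)"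
    hence i: "i < N" and j: "j < N" using E A3 N_def by auto
    show "A' $$ (i,j) = four_block_mat E (0\<^sub>m 1 m) (0\<^sub>m m 1) A3 $$ (i,j)"
      using i j E A3 col0[OF i] row0[OF j] N_def by (auto simp: A3_def E_def)
  qed (insert A' E A3 N_def, auto)
  have A3T: "transpose_mat A3 = A3"
  proof (rule eq_matI)
    fix i j assume "i < dim_row A3" "j < dim_col A3"
    hence i: "i < m" and j: "j < m" using A3 by auto
    have "A' $$ (j+1,i+1) = transpose_mat A' $$ (i+1,j+1)" using i j A' N_def by auto
    then show "transpose_mat A3 $$ (i,j) = A3 $$ (i,j)" using i j A'T by (simp add: A3_def)
  qed (insert A3, auto)
  from Suc.IH[OF A3 A3T] obtain Q3 D3 where Q3: "Q3 \<in> carrier_mat m m" and D3: "D3 \<in> carrier_mat m m"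
    and Q3Q3: "transpose_mat Q3 * Q3 = 1\<^sub>m m" and Q3Q3': "Q3 * transpose_mat Q3 = 1\<^sub>m m"
    and D3d: "diagonal_mat D3" and A3eq: "A3 = Q3 * D3 * transpose_mat Q3" by auto
  define Q1 where "Q1 = four_block_mat (1\<^sub>m 1) (0\<^sub>m 1 m) (0\<^sub>m m 1) Q3"
  define D where "D = four_block_mat E (0\<^sub>m 1 m) (0\<^sub>m m 1) D3"
  have Q1: "Q1 \<in> carrier_mat N N" unfolding Q1_def N_def using Q3 by auto
  have D: "D \<in> carrier_mat N N" unfolding D_def N_def using D3 E by auto
  have Q1T: "transpose_mat Q1 = four_block_mat (1\<^sub>m 1) (0\<^sub>m 1 m) (0\<^sub>m m 1) (transpose_mat Q3)"
    unfolding Q1_def by (subst transpose_four_block_mat[of _ 1 1 _ m _ m], insert Q3, auto)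
  have Q1Q1: "transpose_mat Q1 * Q1 = 1\<^sub>m N" unfolding Q1T unfolding Q1_def N_def
    by (subst mult_four_block_mat[of _ 1 1 _ m _ m], insert Q3 Q3Q3, auto)
  have Q1Q1': "Q1 * transpose_mat Q1 = 1\<^sub>m N" unfolding Q1T unfolding Q1_def N_def
    by (subst mult_four_block_mat[of _ 1 1 _ m _ m], insert Q3 Q3Q3', auto)
  have Q1D: "Q1 * D * transpose_mat Q1 = A'" unfolding Q1T A'blk A3eq unfolding Q1_def D_def
    apply (subst mult_four_block_mat[of _ 1 1 _ m _ m], insert Q3 D3 E, auto)
    apply (subst mult_four_block_mat[of _ 1 1 _ m _ m], insert Q3 D3 E, auto)
    done
  define Q where "Q = H * Q1"
  have Q: "Q \<in> carrier_mat N N" unfolding Q_def using H Q1 by auto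
  have QT: "transpose_mat Q = transpose_mat Q1 * H" unfolding Q_def using H Q1 HT
    by (simp add: transpose_mult[of _ N N])
  have Q1T': "transpose_mat Q1 \<in> carrier_mat N N" using Q1 by auto
  have HHQ: "H * (H * Q1) = Q1" using assoc_mult_mat[OF H H Q1] HH Q1 by simp
  have QQH: "Q1 * (transpose_mat Q1 * H) = H" using assoc_mult_mat[OF Q1 Q1T' H] Q1Q1' H by simp
  have "transpose_mat Q * Q = 1\<^sub>m N" unfolding QT unfolding Q_def using H Q1 HH Q1Q1
    by (simp add: assoc_mult_mat[of _ N N _ N _ N] HHQ)
  moreover have "Q * transpose_mat Q = 1\<^sub>m N" unfolding QT unfolding Q_def using H Q1 HH Q1Q1'
    by (simp add: assoc_mult_mat[of _ N N _ N _ N] QQH)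
  moreover have "S = Q * D * transpose_mat Q"
  proof -
    have "Q * D * transpose_mat Q = H * (Q1 * D * transpose_mat Q1) * H"
      unfolding QT unfolding Q_def using H Q1 D by (simp add: assoc_mult_mat[of _ N N _ N _ N])
    also have "\<dots> = (H * H) * S * (H * H)" unfolding Q1D A'_def using H S
      by (simp add: assoc_mult_mat[of _ N N _ N _ N])
    also have "\<dots> = S" using HH S by simp
    finally show ?thesis by simp
  qed
  moreover have "diagonal_mat D" unfolding diagonal_mat_def
  proof (intro allI impI)
    fix i j assume i: "i < dim_row D" and j: "j < dim_col D" and ij: "i \<noteq> j"
    show "D $$ (i,j) = 0"
    proof (cases "i = 0 \<or> j = 0")
      case True thus ?thesis using i j ij D3 E unfolding D_def by auto
    next
      case False thus ?thesis using i j ij D3 E D3d unfolding D_def diagonal_mat_def by auto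
    qed
  qed
  ultimately show ?case using Q D N_def by blast
qed

definition dmat :: "nat \<Rightarrow> (nat \<Rightarrow> real) \<Rightarrow> real mat" where
  "dmat n f = mat n n (\<lambda>(i,j). if i = j then f i else 0)"

lemma dmat_carrier[simp]: "dmat n f \<in> carrier_mat n n"
  unfolding dmat_def by auto

lemma dmat_T[simp]: "transpose_mat (dmat n f) = dmat n f"
  unfolding dmat_def by (rule eq_matI) auto

lemma dmat_mult: "dmat n f * dmat n g = dmat n (\<lambda>i. f i * g i)"
proof (rule eq_matI)
  fix i j assume "i < dim_row (dmat n (\<lambda>i. f i * g i))" "j < dim_col (dmat n (\<lambda>i. f i * g i))"
  hence i: "i < n" and j: "j < n" by (auto simp: dmat_def)
  have "(dmat n f * dmat n g) $$ (i,j) = (\<Sum>k\<in>{0..<n}. (if i = k then f i else 0) * (if k = j then g k else 0))"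
    using i j by (simp add: dmat_def scalar_prod_def)
  also have "\<dots> = (\<Sum>k\<in>{0..<n}. if k = i then (if i = j then f i * g i else 0) else 0)"
    by (rule sum.cong) auto
  also have "\<dots> = dmat n (\<lambda>i. f i * g i) $$ (i,j)" using i j by (simp add: dmat_def)
  finally show "(dmat n f * dmat n g) $$ (i,j) = dmat n (\<lambda>i. f i * g i) $$ (i,j)" .
qed (auto simp: dmat_def)

lemma dmat_vec: assumes "v \<in> carrier_vec n" shows "dmat n f *\<^sub>v v = vec n (\<lambda>i. f i * v$i)"
proof (rule eq_vecI)
  fix i assume "i < dim_vec (vec n (\<lambda>i. f i * v$i))" hence i: "i < n" by auto
  have "(dmat n f *\<^sub>v v) $ i = (\<Sum>k\<in>{0..<n}. (if i = k then f i else 0) * v$k)"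
    using i assms by (simp add: dmat_def scalar_prod_def)
  also have "\<dots> = (\<Sum>k\<in>{0..<n}. if k = i then f i * v$i else 0)"
    by (rule sum.cong) auto
  finally show "(dmat n f *\<^sub>v v) $ i = vec n (\<lambda>i. f i * v$i) $ i" using i by simp
qed (auto simp: dmat_def)

lemma dmat_one: "dmat n (\<lambda>_. 1) = 1\<^sub>m n"
  unfolding dmat_def by (rule eq_matI) auto

lemma dmat_quad: assumes "v \<in> carrier_vec n"
  shows "v \<bullet> (dmat n f *\<^sub>v v) = (\<Sum>i\<in>{0..<n}. f i * (v$i * v$i))"
  using assms unfolding dmat_vec[OF assms] by (simp add: scalar_prod_def algebra_simps)

lemma diag_eq_dmat: assumes "D \<in> carrier_mat n n" "diagonal_mat D"
  shows "D = dmat n (\<lambda>i. D $$ (i,i))"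
  using assms unfolding diagonal_mat_def dmat_def by (intro eq_matI) auto

locale orth =
  fixes Q :: "real mat" and n :: nat
  assumes Q: "Q \<in> carrier_mat n n" and QTQ: "transpose_mat Q * Q = 1\<^sub>m n"
    and QQT: "Q * transpose_mat Q = 1\<^sub>m n"
begin

lemma QT: "transpose_mat Q \<in> carrier_mat n n" using Q by auto

lemma QTQX: "X \<in> carrier_mat n nc \<Longrightarrow> transpose_mat Q * (Q * X) = X"
  using assoc_mult_mat[OF QT Q, of X nc] QTQ by simp

lemma conj_mult: assumes A: "A \<in> carrier_mat n n" and B: "B \<in> carrier_mat n n"
  shows "(Q * A * transpose_mat Q) * (Q * B * transpose_mat Q) = Q * (A * B) * transpose_mat Q"
proof -
  have "transpose_mat Q * (Q * (B * transpose_mat Q)) = B * transpose_mat Q"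
    using QTQX[of "B * transpose_mat Q" n] B QT by simp
  thus ?thesis using Q QT A B by (simp add: assoc_mult_mat[of _ n n _ n _ n])
qed

lemma conj_T: assumes A: "A \<in> carrier_mat n n"
  shows "transpose_mat (Q * A * transpose_mat Q) = Q * transpose_mat A * transpose_mat Q"
proof -
  have QA: "Q * A \<in> carrier_mat n n" using Q A by auto
  show ?thesis using transpose_mult[OF QA QT] transpose_mult[OF Q A] Q A
    by (simp add: assoc_mult_mat[of _ n n _ n _ n])
qed

lemma conj_vec: assumes A: "A \<in> carrier_mat n n" and x: "x \<in> carrier_vec n"
  shows "(Q * A * transpose_mat Q) *\<^sub>v x = Q *\<^sub>v (A *\<^sub>v (transpose_mat Q *\<^sub>v x))"
  using Q QT A x by (simp add: assoc_mult_mat_vec[of _ n n _ n])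

lemma conj_quad: assumes A: "A \<in> carrier_mat n n" and x: "x \<in> carrier_vec n"
  shows "x \<bullet> ((Q * A * transpose_mat Q) *\<^sub>v x) = (transpose_mat Q *\<^sub>v x) \<bullet> (A *\<^sub>v (transpose_mat Q *\<^sub>v x))"
  unfolding conj_vec[OF A x]
  by (rule transpose_vec_mult_scalar[OF Q _ x, symmetric]) (insert A x QT, auto)

lemma norm_pres: assumes x: "x \<in> carrier_vec n"
  shows "x \<bullet> x = (transpose_mat Q *\<^sub>v x) \<bullet> (transpose_mat Q *\<^sub>v x)"
proof -
  have "x = Q * (1\<^sub>m n) * transpose_mat Q *\<^sub>v x" using Q x QQT by simp
  hence "x \<bullet> x = x \<bullet> ((Q * (1\<^sub>m n) * transpose_mat Q) *\<^sub>v x)" by simp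
  also have "\<dots> = (transpose_mat Q *\<^sub>v x) \<bullet> (transpose_mat Q *\<^sub>v x)"
    using conj_quad[of "1\<^sub>m n" x] x QT by simp
  finally show ?thesis .
qed

lemma Qe: "i < n \<Longrightarrow> transpose_mat Q *\<^sub>v (Q *\<^sub>v unit_vec n i) = unit_vec n i"
  using assoc_mult_mat_vec[OF QT Q, of "unit_vec n i"] QTQ by simp

lemma eig_iff: "eigenvalue (Q * dmat n d * transpose_mat Q) k \<longleftrightarrow> (\<exists>i<n. d i = k)"
proof
  let ?S = "Q * dmat n d * transpose_mat Q"
  have S: "?S \<in> carrier_mat n n" using Q by auto
  assume "eigenvalue ?S k"
  then obtain x where x: "x \<in> carrier_vec n" "x \<noteq> 0\<^sub>v n" and Sx: "?S *\<^sub>v x = k \<cdot>\<^sub>v x"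
    unfolding eigenvalue_def eigenvector_def using S by auto
  define y where "y = transpose_mat Q *\<^sub>v x"
  have y: "y \<in> carrier_vec n" unfolding y_def using QT x by auto
  have "x = Q *\<^sub>v y" unfolding y_def using assoc_mult_mat_vec[OF Q QT x(1)] QQT x by simp
  hence y0: "y \<noteq> 0\<^sub>v n" using x Q by auto
  have "transpose_mat Q *\<^sub>v (?S *\<^sub>v x) = dmat n d *\<^sub>v y"
    unfolding conj_vec[OF dmat_carrier x(1)] y_def[symmetric] using assoc_mult_mat_vec[OF QT Q, of "dmat n d *\<^sub>v y"] QTQ y mult_mat_vec_carrier[OF dmat_carrier y]
    by simp
  also have "transpose_mat Q *\<^sub>v (?S *\<^sub>v x) = k \<cdot>\<^sub>v y" unfolding Sx y_def using QT x by (simp add: mult_mat_vec)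
  finally have eq: "dmat n d *\<^sub>v y = k \<cdot>\<^sub>v y" by simp
  from y y0 obtain i where i: "i < n" and yi: "y $ i \<noteq> 0" by (metis eq_vecI carrier_vecD index_zero_vec(1) index_zero_vec(2))
  from arg_cong[OF eq, of "\<lambda>v. v $ i"] have "d i * y$i = k * y$i" using i y by (simp add: dmat_vec)
  with yi i show "\<exists>i<n. d i = k" by auto
next
  let ?S = "Q * dmat n d * transpose_mat Q"
  have S: "?S \<in> carrier_mat n n" using Q by auto
  assume "\<exists>i<n. d i = k"
  then obtain i where i: "i < n" and di: "d i = k" by auto
  define v where "v = Q *\<^sub>v unit_vec n i"
  have v: "v \<in> carrier_vec n" unfolding v_def using Q by auto
  have Qv: "transpose_mat Q *\<^sub>v v = unit_vec n i" unfolding v_def using Qe[OF i] .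
  have v0: "v \<noteq> 0\<^sub>v n"
  proof
    assume "v = 0\<^sub>v n"
    moreover have "transpose_mat Q *\<^sub>v 0\<^sub>v n = 0\<^sub>v n" using QT by (intro eq_vecI) auto
    ultimately have "(unit_vec n i :: real vec) = 0\<^sub>v n" using Qv by metis
    with unit_vec_nonzero[OF i, where 'a=real] show False by simp
  qed
  have "?S *\<^sub>v v = Q *\<^sub>v (dmat n d *\<^sub>v (transpose_mat Q *\<^sub>v v))"
    by (rule conj_vec[OF dmat_carrier v])
  also note Qv
  also have "dmat n d *\<^sub>v unit_vec n i = k \<cdot>\<^sub>v unit_vec n i"
    using i di by (intro eq_vecI) (auto simp: dmat_vec)
  also have "Q *\<^sub>v (k \<cdot>\<^sub>v unit_vec n i) = k \<cdot>\<^sub>v v" unfolding v_def using Q by (simp add: mult_mat_vec)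
  finally show "eigenvalue ?S k" unfolding eigenvalue_def eigenvector_def using v v0 S Q by auto
qed

end

lemma spectral': fixes S :: "real mat"
  assumes "S \<in> carrier_mat n n" "transpose_mat S = S"
  shows "\<exists>Q d. orth Q n \<and> S = Q * dmat n d * transpose_mat Q"
proof -
  from spectral[OF assms] obtain Q D where "Q \<in> carrier_mat n n" "D \<in> carrier_mat n n"
    "transpose_mat Q * Q = 1\<^sub>m n" "Q * transpose_mat Q = 1\<^sub>m n" "diagonal_mat D" "S = Q * D * transpose_mat Q"
    by blast
  then show ?thesis using diag_eq_dmat[of D n] unfolding orth_def by metis
qed

lemma dmat_cong: "(\<And>i. i < n \<Longrightarrow> f i = g i) \<Longrightarrow> dmat n f = dmat n g"
  unfolding dmat_def by (intro eq_matI) auto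

lemma sum_lower: fixes y :: "real vec"
  assumes "\<And>i. i < n \<Longrightarrow> c \<le> f i" "y \<in> carrier_vec n"
  shows "c * (y \<bullet> y) \<le> (\<Sum>i\<in>{0..<n}. f i * (y$i * y$i))"
proof -
  have "c * (y \<bullet> y) = (\<Sum>i\<in>{0..<n}. c * (y$i * y$i))"
    using assms(2) by (simp add: scalar_prod_def sum_distrib_left)
  also have "\<dots> \<le> (\<Sum>i\<in>{0..<n}. f i * (y$i * y$i))"
    by (intro sum_mono mult_right_mono) (auto simp: assms(1))
  finally show ?thesis .
qed

context orth
begin

lemma quad_dmat: assumes x: "x \<in> carrier_vec n"
  shows "x \<bullet> ((Q * dmat n d * transpose_mat Q) *\<^sub>v x) =
    (\<Sum>i\<in>{0..<n}. d i * ((transpose_mat Q *\<^sub>v x)$i * (transpose_mat Q *\<^sub>v x)$i))"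
  unfolding conj_quad[OF dmat_carrier x] by (rule dmat_quad) (insert x QT, auto)

lemma quad_lower: assumes x: "x \<in> carrier_vec n" and c: "\<And>i. i < n \<Longrightarrow> c \<le> d i"
  shows "c * (x \<bullet> x) \<le> x \<bullet> ((Q * dmat n d * transpose_mat Q) *\<^sub>v x)"
  unfolding quad_dmat[OF x] norm_pres[OF x] by (rule sum_lower[OF c]) (insert x QT, auto)

lemma sym_dmat: "transpose_mat (Q * dmat n d * transpose_mat Q) = Q * dmat n d * transpose_mat Q"
  using conj_T[OF dmat_carrier] by simp

lemma Qe_vec: assumes i: "i < n"
  shows "Q *\<^sub>v unit_vec n i \<in> carrier_vec n" "Q *\<^sub>v unit_vec n i \<noteq> 0\<^sub>v n"
    "(Q * dmat n d * transpose_mat Q) *\<^sub>v (Q *\<^sub>v unit_vec n i) = d i \<cdot>\<^sub>v (Q *\<^sub>v unit_vec n i)"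
    "(Q *\<^sub>v unit_vec n i) \<bullet> (Q *\<^sub>v unit_vec n i) = 1"
proof -
  define v where "v = Q *\<^sub>v unit_vec n i"
  show v: "Q *\<^sub>v unit_vec n i \<in> carrier_vec n" using Q by auto
  have Qv: "transpose_mat Q *\<^sub>v v = unit_vec n i" unfolding v_def using Qe[OF i] .
  show "Q *\<^sub>v unit_vec n i \<noteq> 0\<^sub>v n" unfolding v_def[symmetric]
  proof
    assume "v = 0\<^sub>v n"
    moreover have "transpose_mat Q *\<^sub>v 0\<^sub>v n = 0\<^sub>v n" using QT by (intro eq_vecI) auto
    ultimately have "(unit_vec n i :: real vec) = 0\<^sub>v n" using Qv by metis
    with unit_vec_nonzero[OF i, where 'a=real] show False by simp
  qed
  have "(Q * dmat n d * transpose_mat Q) *\<^sub>v v = Q *\<^sub>v (dmat n d *\<^sub>v (transpose_mat Q *\<^sub>v v))"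
    by (rule conj_vec[OF dmat_carrier v[folded v_def]])
  also note Qv
  also have "dmat n d *\<^sub>v unit_vec n i = d i \<cdot>\<^sub>v unit_vec n i"
    using i by (intro eq_vecI) (auto simp: dmat_vec)
  also have "Q *\<^sub>v (d i \<cdot>\<^sub>v unit_vec n i) = d i \<cdot>\<^sub>v v" unfolding v_def using Q by (simp add: mult_mat_vec)
  finally show "(Q * dmat n d * transpose_mat Q) *\<^sub>v (Q *\<^sub>v unit_vec n i) = d i \<cdot>\<^sub>v (Q *\<^sub>v unit_vec n i)"
    unfolding v_def .
  show "(Q *\<^sub>v unit_vec n i) \<bullet> (Q *\<^sub>v unit_vec n i) = 1"
    using norm_pres[OF v] Qv i unfolding v_def by simp
qed

lemma quad_e: assumes i: "i < n"
  shows "(Q *\<^sub>v unit_vec n i) \<bullet> ((Q * dmat n d * transpose_mat Q) *\<^sub>v (Q *\<^sub>v unit_vec n i)) = d i"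
  unfolding Qe_vec(3)[OF i] using Qe_vec(1,4)[OF i]
  by (simp add: scalar_prod_smult_distrib[OF _ Qe_vec(1)[OF i]])

lemma pos_d: assumes "\<And>x. x \<in> carrier_vec n \<Longrightarrow> x \<noteq> 0\<^sub>v n \<Longrightarrow> 0 < x \<bullet> ((Q * dmat n d * transpose_mat Q) *\<^sub>v x)"
  and i: "i < n" shows "0 < d i"
  using assms(1)[OF Qe_vec(1,2)[OF i]] quad_e[OF i] by simp

end

lemma pd_matD: assumes "pd_mat S" "S \<in> carrier_mat n n"
  shows "transpose_mat S = S" "\<And>x. x \<in> carrier_vec n \<Longrightarrow> x \<noteq> 0\<^sub>v n \<Longrightarrow> 0 < x \<bullet> (S *\<^sub>v x)"
  using assms unfolding pd_mat_def by auto

lemma pd_sqrt_exists: assumes S: "S \<in> carrier_mat n n" and pd: "pd_mat S"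
  shows "\<exists>R. R \<in> carrier_mat n n \<and> pd_mat R \<and> R * R = S"
proof -
  from spectral'[OF S pd_matD(1)[OF pd S]] obtain Q d where o: "orth Q n" and Sq: "S = Q * dmat n d * transpose_mat Q" by auto
  interpret orth Q n by fact
  have dpos: "\<And>i. i < n \<Longrightarrow> 0 < d i" using pos_d pd_matD(2)[OF pd S] unfolding Sq by blast
  define R where "R = Q * dmat n (\<lambda>i. sqrt (d i)) * transpose_mat Q"
  have R: "R \<in> carrier_mat n n" unfolding R_def using Q by auto
  have "R * R = Q * (dmat n (\<lambda>i. sqrt (d i)) * dmat n (\<lambda>i. sqrt (d i))) * transpose_mat Q"
    unfolding R_def by (rule conj_mult) auto
  also have "dmat n (\<lambda>i. sqrt (d i)) * dmat n (\<lambda>i. sqrt (d i)) = dmat n d"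
    unfolding dmat_mult using dpos by (intro dmat_cong) (simp add: less_imp_le)
  finally have RR: "R * R = S" unfolding Sq .
  have "pd_mat R" unfolding pd_mat_def
  proof (intro conjI ballI impI)
    show "R \<in> carrier_mat (dim_row R) (dim_row R)" using R by auto
    show "transpose_mat R = R" unfolding R_def by (rule sym_dmat)
    fix x :: "real vec" assume x: "x \<in> carrier_vec (dim_row R)" and x0: "x \<noteq> 0\<^sub>v (dim_row R)"
    hence x: "x \<in> carrier_vec n" and x0: "x \<noteq> 0\<^sub>v n" using R by auto
    define c where "c = Min ((\<lambda>i. sqrt (d i)) ` {..<n})"
    have n: "0 < n" using x x0 by (cases n) auto
    have c0: "0 < c" unfolding c_def using n dpos by (subst Min_gr_iff) auto
    have "c * (x \<bullet> x) \<le> x \<bullet> (R *\<^sub>v x)" unfolding R_def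
      by (rule quad_lower[OF x]) (auto simp: c_def)
    moreover have "0 < c * (x \<bullet> x)" using c0 sq_pos_vec[OF x x0] by simp
    ultimately show "0 < x \<bullet> (R *\<^sub>v x)" by simp
  qed
  with R RR show ?thesis by blast
qed

lemma mat_eq_minus0: fixes A B :: "real mat"
  assumes "A \<in> carrier_mat n n" "B \<in> carrier_mat n n" "A - B = 0\<^sub>m n n" shows "A = B"
proof (rule eq_matI)
  fix i j assume "i < dim_row B" "j < dim_col B"
  hence ij: "i < n" "j < n" using assms by auto
  have "(A - B) $$ (i,j) = 0" using arg_cong[OF assms(3), of "\<lambda>M. M $$ (i,j)"] ij by simp
  thus "A $$ (i,j) = B $$ (i,j)" using ij assms(1,2) by simp
qed (insert assms, auto)

lemma pd_sqrt_unique: fixes R1 R2 :: "real mat"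
  assumes R1: "R1 \<in> carrier_mat n n" and R2: "R2 \<in> carrier_mat n n"
    and p1: "pd_mat R1" and p2: "pd_mat R2" and eq: "R1 * R1 = R2 * R2"
  shows "R1 = R2"
proof -
  define Dl where "Dl = R1 - R2"
  have Dl: "Dl \<in> carrier_mat n n" unfolding Dl_def using R1 R2 by auto
  have DlT: "transpose_mat Dl = Dl" unfolding Dl_def
    using transpose_minus[OF R1 R2] pd_matD(1)[OF p1 R1] pd_matD(1)[OF p2 R2] by simp
  from spectral'[OF Dl DlT] obtain Q d where o: "orth Q n" and Dq: "Dl = Q * dmat n d * transpose_mat Q" by auto
  interpret orth Q n by fact
  have d0: "d i = 0" if i: "i < n" for i
  proof -
    define v where "v = Q *\<^sub>v unit_vec n i"
    define mu where "mu = d i"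
    have v: "v \<in> carrier_vec n" and v0: "v \<noteq> 0\<^sub>v n" and Dv: "Dl *\<^sub>v v = mu \<cdot>\<^sub>v v"
      using Qe_vec(1,2)[OF i] Qe_vec(3)[OF i, of d] unfolding v_def[symmetric] mu_def Dq[symmetric] by auto
    define a where "a = R1 *\<^sub>v v"
    define b where "b = R2 *\<^sub>v v"
    have a: "a \<in> carrier_vec n" and b: "b \<in> carrier_vec n" using R1 R2 v unfolding a_def b_def by auto
    have Dv': "Dl *\<^sub>v v = a - b" unfolding Dl_def a_def b_def using R1 R2 v by (simp add: minus_mult_distrib_mat_vec)
    have Db: "Dl *\<^sub>v b = R1 *\<^sub>v b - R2 *\<^sub>v b" unfolding Dl_def using R1 R2 b by (simp add: minus_mult_distrib_mat_vec)
    have R1a: "R1 *\<^sub>v a = R2 *\<^sub>v b" unfolding a_def b_def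
      using assoc_mult_mat_vec[OF R1 R1 v] assoc_mult_mat_vec[OF R2 R2 v] eq by simp
    have "R1 *\<^sub>v (Dl *\<^sub>v v) = mu \<cdot>\<^sub>v a" unfolding Dv a_def using R1 v by (simp add: mult_mat_vec)
    moreover have "R1 *\<^sub>v (Dl *\<^sub>v v) = R1 *\<^sub>v a - R1 *\<^sub>v b" unfolding Dv' using R1 a b
      by (simp add: mult_minus_distrib_mat_vec)
    ultimately have e1: "R2 *\<^sub>v b - R1 *\<^sub>v b = mu \<cdot>\<^sub>v a" using R1a by simp
    have "mu \<cdot>\<^sub>v a + Dl *\<^sub>v b = 0\<^sub>v n" unfolding Db
    proof (rule eq_vecI)
      fix i assume "i < dim_vec (0\<^sub>v n :: real vec)" hence i: "i < n" by simp
      have "(R2 *\<^sub>v b - R1 *\<^sub>v b) $ i = (mu \<cdot>\<^sub>v a) $ i" using e1 by simp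
      thus "(mu \<cdot>\<^sub>v a + (R1 *\<^sub>v b - R2 *\<^sub>v b)) $ i = 0\<^sub>v n $ i" using i R1 R2 a b by simp
    qed (insert R1 R2 a, auto)
    hence "v \<bullet> (mu \<cdot>\<^sub>v a + Dl *\<^sub>v b) = 0" using v by simp
    hence "mu * (v \<bullet> a) + v \<bullet> (Dl *\<^sub>v b) = 0"
      using v a b Dl by (simp add: scalar_prod_add_distrib[of _ n] scalar_prod_smult_distrib)
    moreover have "v \<bullet> (Dl *\<^sub>v b) = (Dl *\<^sub>v v) \<bullet> b"
      using transpose_vec_mult_scalar[OF Dl b v] DlT by simp
    moreover have "(Dl *\<^sub>v v) \<bullet> b = mu * (v \<bullet> b)" unfolding Dv using v b by simp
    ultimately have "mu * (v \<bullet> a + v \<bullet> b) = 0" by (simp add: algebra_simps)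
    moreover have "0 < v \<bullet> a" "0 < v \<bullet> b" unfolding a_def b_def
      using pd_matD(2)[OF p1 R1 v v0] pd_matD(2)[OF p2 R2 v v0] by auto
    ultimately show ?thesis unfolding mu_def by simp
  qed
  have "dmat n d = 0\<^sub>m n n" unfolding dmat_def using d0 by (intro eq_matI) auto
  hence "Dl = 0\<^sub>m n n" unfolding Dq using Q by simp
  thus ?thesis using mat_eq_minus0[OF R1 R2] unfolding Dl_def by simp
qed

lemma pd_sqrt_props: assumes S: "S \<in> carrier_mat n n" and pd: "pd_mat S"
  shows "pd_sqrt S \<in> carrier_mat n n \<and> pd_mat (pd_sqrt S) \<and> pd_sqrt S * pd_sqrt S = S"
proof -
  have dS: "dim_row S = n" using S by auto
  have "\<exists>!R. R \<in> carrier_mat (dim_row S) (dim_row S) \<and> pd_mat R \<and> R * R = S"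
    unfolding dS using pd_sqrt_exists[OF S pd] pd_sqrt_unique by blast
  from theI'[OF this] show ?thesis unfolding pd_sqrt_def dS .
qed

lemma similar_eig: fixes A B C Bi :: "real mat"
  assumes B: "B \<in> carrier_mat n n" and C: "C \<in> carrier_mat n n" and Bi: "Bi \<in> carrier_mat n n"
    and BiB: "Bi * B = 1\<^sub>m n" and A: "A = B * C * Bi" and ev: "eigenvalue C k"
  shows "eigenvalue A k"
proof -
  obtain v where v: "v \<in> carrier_vec n" and v0: "v \<noteq> 0\<^sub>v n" and Cv: "C *\<^sub>v v = k \<cdot>\<^sub>v v"
    using ev C unfolding eigenvalue_def eigenvector_def by auto
  define w where "w = B *\<^sub>v v"
  have w: "w \<in> carrier_vec n" unfolding w_def using B v by auto
  have Biw: "Bi *\<^sub>v w = v" unfolding w_def using assoc_mult_mat_vec[OF Bi B v] BiB v by simp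
  have "A *\<^sub>v w = B *\<^sub>v (C *\<^sub>v (Bi *\<^sub>v w))" unfolding A using B C Bi w
    by (simp add: assoc_mult_mat_vec[of _ n n _ n])
  also have "\<dots> = k \<cdot>\<^sub>v w" unfolding Biw Cv unfolding w_def using B v by (simp add: mult_mat_vec)
  finally have Aw: "A *\<^sub>v w = k \<cdot>\<^sub>v w" .
  have w0: "w \<noteq> 0\<^sub>v n"
  proof
    assume "w = 0\<^sub>v n"
    moreover have "Bi *\<^sub>v 0\<^sub>v n = 0\<^sub>v n" using Bi by (intro eq_vecI) auto
    ultimately show False using Biw v0 by metis
  qed
  have "A \<in> carrier_mat n n" unfolding A using B C Bi by auto
  thus ?thesis unfolding eigenvalue_def eigenvector_def using w w0 Aw by auto
qed

lemma quad_transfer: fixes H Hi P :: "real mat"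
  assumes H: "H \<in> carrier_mat n n" and Hi: "Hi \<in> carrier_mat n n" and P: "P \<in> carrier_mat n n"
    and HT: "transpose_mat H = H" and HiT: "transpose_mat Hi = Hi" and HiH: "Hi * H = 1\<^sub>m n"
    and y: "y \<in> carrier_vec n"
  shows "(H *\<^sub>v y) \<bullet> ((Hi * P * Hi) *\<^sub>v (H *\<^sub>v y)) = y \<bullet> (P *\<^sub>v y)"
    "(H *\<^sub>v y) \<bullet> (H *\<^sub>v y) = y \<bullet> ((H * H) *\<^sub>v y)"
proof -
  define z where "z = H *\<^sub>v y"
  have z: "z \<in> carrier_vec n" unfolding z_def using H y by auto
  have Hiz: "Hi *\<^sub>v z = y" unfolding z_def using assoc_mult_mat_vec[OF Hi H y] HiH y by simp
  have "(Hi * P * Hi) *\<^sub>v z = Hi *\<^sub>v (P *\<^sub>v (Hi *\<^sub>v z))" using Hi P z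
    by (simp add: assoc_mult_mat_vec[of _ n n _ n])
  also have "\<dots> = Hi *\<^sub>v (P *\<^sub>v y)" unfolding Hiz ..
  finally have Tz: "(Hi * P * Hi) *\<^sub>v z = Hi *\<^sub>v (P *\<^sub>v y)" .
  have "z \<bullet> (Hi *\<^sub>v (P *\<^sub>v y)) = (transpose_mat Hi *\<^sub>v z) \<bullet> (P *\<^sub>v y)"
    using transpose_vec_mult_scalar[OF Hi _ z, of "P *\<^sub>v y"] P y by simp
  also have "\<dots> = y \<bullet> (P *\<^sub>v y)" unfolding HiT Hiz ..
  finally show "(H *\<^sub>v y) \<bullet> ((Hi * P * Hi) *\<^sub>v (H *\<^sub>v y)) = y \<bullet> (P *\<^sub>v y)"
    unfolding z_def[symmetric] Tz .
  have "z \<bullet> z = (transpose_mat H *\<^sub>v z) \<bullet> y"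
    using transpose_vec_mult_scalar[OF H y z] unfolding z_def by simp
  also have "transpose_mat H *\<^sub>v z = (H * H) *\<^sub>v y" unfolding HT z_def using H y
    by (simp add: assoc_mult_mat_vec[of _ n n _ n])
  also have "((H * H) *\<^sub>v y) \<bullet> y = y \<bullet> ((H * H) *\<^sub>v y)"
    by (rule comm_scalar_prod[of _ n]) (insert H y, auto)
  finally show "(H *\<^sub>v y) \<bullet> (H *\<^sub>v y) = y \<bullet> ((H * H) *\<^sub>v y)" unfolding z_def .
qed

lemma pd_inj: assumes W: "W \<in> carrier_mat n n" and pd: "pd_mat W"
  shows "\<And>v. v \<in> carrier_vec n \<Longrightarrow> W *\<^sub>v v = 0\<^sub>v n \<Longrightarrow> v = 0\<^sub>v n"
proof (rule ccontr)
  fix v :: "real vec" assume v: "v \<in> carrier_vec n" and Wv: "W *\<^sub>v v = 0\<^sub>v n" and v0: "v \<noteq> 0\<^sub>v n"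
  from pd_matD(2)[OF pd W v v0] Wv v show False by simp
qed

lemma gen_eig: fixes W P :: "real mat"
  assumes W: "W \<in> carrier_mat n n" and Wpd: "pd_mat W" and P: "P \<in> carrier_mat n n"
    and PT: "transpose_mat P = P" and n: "0 < n"
  shows "(\<forall>y \<in> carrier_vec n. lambda_min (P * minv W) * (y \<bullet> (W *\<^sub>v y)) \<le> y \<bullet> (P *\<^sub>v y)) \<and>
    (\<exists>y \<in> carrier_vec n. y \<noteq> 0\<^sub>v n \<and> y \<bullet> (P *\<^sub>v y) = lambda_min (P * minv W) * (y \<bullet> (W *\<^sub>v y)))"
proof -
  from spectral'[OF W pd_matD(1)[OF Wpd W]] obtain Qw dw where ow: "orth Qw n"
    and Wq: "W = Qw * dmat n dw * transpose_mat Qw" by auto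
  interpret ow: orth Qw n by fact
  have dpos: "\<And>i. i < n \<Longrightarrow> 0 < dw i" using ow.pos_d pd_matD(2)[OF Wpd W] unfolding Wq by blast
  have dne: "\<And>i. i < n \<Longrightarrow> dw i \<noteq> 0" using dpos by (metis less_irrefl)
  define H where "H = Qw * dmat n (\<lambda>i. sqrt (dw i)) * transpose_mat Qw"
  define Hi where "Hi = Qw * dmat n (\<lambda>i. 1 / sqrt (dw i)) * transpose_mat Qw"
  have H: "H \<in> carrier_mat n n" and Hi: "Hi \<in> carrier_mat n n" unfolding H_def Hi_def using ow.Q by auto
  have HT: "transpose_mat H = H" and HiT: "transpose_mat Hi = Hi" unfolding H_def Hi_def by (rule ow.sym_dmat)+
  have one: "Qw * dmat n (\<lambda>_. 1) * transpose_mat Qw = 1\<^sub>m n" unfolding dmat_one using ow.Q ow.QQT by simp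
  have HHi: "H * Hi = 1\<^sub>m n" unfolding H_def Hi_def ow.conj_mult[OF dmat_carrier dmat_carrier] dmat_mult
    using dpos by (subst dmat_cong[of n _ "\<lambda>_. 1"]) (auto simp: one less_imp_le dne)
  have HiH: "Hi * H = 1\<^sub>m n" unfolding H_def Hi_def ow.conj_mult[OF dmat_carrier dmat_carrier] dmat_mult
    using dpos by (subst dmat_cong[of n _ "\<lambda>_. 1"]) (auto simp: one less_imp_le dne)
  have HH: "H * H = W" unfolding H_def Wq ow.conj_mult[OF dmat_carrier dmat_carrier] dmat_mult
    using dpos by (subst dmat_cong[of n _ dw]) (auto simp: less_imp_le)
  have HHiZ: "\<And>Z. Z \<in> carrier_mat n n \<Longrightarrow> H * (Hi * Z) = Z"
    using assoc_mult_mat[OF H Hi] HHi by simp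
  have HiHZ: "\<And>Z. Z \<in> carrier_mat n n \<Longrightarrow> Hi * (H * Z) = Z"
    using assoc_mult_mat[OF Hi H] HiH by simp
  from minv_props[OF W pd_inj[OF W Wpd]] have Wi: "minv W \<in> carrier_mat n n" and WWi: "W * minv W = 1\<^sub>m n"
    by auto
  have "Hi * Hi * W = 1\<^sub>m n" unfolding HH[symmetric] using H Hi
    by (simp add: assoc_mult_mat[of _ n n _ n _ n] HiHZ HiH)
  hence WiE: "minv W = Hi * Hi"
    using assoc_mult_mat[of "Hi * Hi" n n W n "minv W" n] WWi Hi W Wi by simp
  define T where "T = Hi * P * Hi"
  have T: "T \<in> carrier_mat n n" unfolding T_def using Hi P by auto
  have TT: "transpose_mat T = T"
  proof -
    have HP: "Hi * P \<in> carrier_mat n n" using Hi P by auto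
    have "transpose_mat T = transpose_mat Hi * transpose_mat (Hi * P)" unfolding T_def
      using transpose_mult[OF HP Hi] .
    also have "transpose_mat (Hi * P) = transpose_mat P * transpose_mat Hi" using transpose_mult[OF Hi P] .
    finally show ?thesis unfolding T_def HiT PT using Hi P by (simp add: assoc_mult_mat[of _ n n _ n _ n])
  qed
  from spectral'[OF T TT] obtain Qt dt where ot: "orth Qt n"
    and Tq: "T = Qt * dmat n dt * transpose_mat Qt" by auto
  interpret ot: orth Qt n by fact
  define X where "X = P * minv W"
  have X: "X \<in> carrier_mat n n" unfolding X_def using P Wi by auto
  have X1: "X = H * T * Hi" unfolding X_def WiE T_def using H Hi P
    by (simp add: assoc_mult_mat[of _ n n _ n _ n] HHiZ)
  have X2: "T = Hi * X * H" unfolding X_def WiE T_def using H Hi P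
    by (simp add: assoc_mult_mat[of _ n n _ n _ n] HiH)
  have eigset: "{k. eigenvalue X k} = dt ` {..<n}"
  proof -
    have "eigenvalue X k \<longleftrightarrow> eigenvalue T k" for k
      using similar_eig[OF H T Hi HiH X1] similar_eig[OF Hi X H HHi X2] by blast
    thus ?thesis unfolding Tq ot.eig_iff by auto
  qed
  define mu where "mu = lambda_min X"
  have mu: "mu = Min (dt ` {..<n})" unfolding mu_def lambda_min_def eigset ..
  have ne: "dt ` {..<n} \<noteq> {}" using n by auto
  obtain i0 where i0: "i0 < n" and di0: "dt i0 = mu" using Min_in[OF _ ne] unfolding mu[symmetric] by auto
  have mule: "\<And>i. i < n \<Longrightarrow> mu \<le> dt i" unfolding mu by (rule Min_le) auto
  have part1: "mu * (y \<bullet> (W *\<^sub>v y)) \<le> y \<bullet> (P *\<^sub>v y)" if y: "y \<in> carrier_vec n" for y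
  proof -
    have z: "H *\<^sub>v y \<in> carrier_vec n" using H y by auto
    have "mu * ((H *\<^sub>v y) \<bullet> (H *\<^sub>v y)) \<le> (H *\<^sub>v y) \<bullet> (T *\<^sub>v (H *\<^sub>v y))"
      unfolding Tq by (rule ot.quad_lower[OF z]) (rule mule)
    thus ?thesis unfolding T_def quad_transfer[OF H Hi P HT HiT HiH y] HH .
  qed
  define z where "z = Qt *\<^sub>v unit_vec n i0"
  define y where "y = Hi *\<^sub>v z"
  have z: "z \<in> carrier_vec n" and z0: "z \<noteq> 0\<^sub>v n" and zz: "z \<bullet> z = 1"
    unfolding z_def using ot.Qe_vec(1,2,4)[OF i0] by auto
  have y: "y \<in> carrier_vec n" unfolding y_def using Hi z by auto
  have Hy: "H *\<^sub>v y = z" unfolding y_def using assoc_mult_mat_vec[OF H Hi z] HHi z by simp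
  have y0: "y \<noteq> 0\<^sub>v n"
  proof
    assume "y = 0\<^sub>v n"
    moreover have "H *\<^sub>v 0\<^sub>v n = 0\<^sub>v n" using H by (intro eq_vecI) auto
    ultimately show False using Hy z0 by metis
  qed
  have "y \<bullet> (P *\<^sub>v y) = mu" using quad_transfer(1)[OF H Hi P HT HiT HiH y] ot.quad_e[OF i0, of dt]
    unfolding Hy z_def[symmetric] Tq[symmetric] T_def di0 by simp
  moreover have "y \<bullet> (W *\<^sub>v y) = 1" using quad_transfer(2)[OF H Hi P HT HiT HiH y] zz
    unfolding Hy HH by simp
  ultimately have part2: "y \<bullet> (P *\<^sub>v y) = mu * (y \<bullet> (W *\<^sub>v y))" by simp
  show ?thesis using part1 part2 y y0 unfolding mu_def X_def by blast
qed



lemma rank_inj: fixes Ob :: "real mat"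
  assumes Ob: "Ob \<in> carrier_mat m n" and r: "vec_space.rank m Ob = n"
  shows "\<And>y. y \<in> carrier_vec n \<Longrightarrow> Ob *\<^sub>v y = 0\<^sub>v m \<Longrightarrow> y = 0\<^sub>v n"
proof (rule ccontr)
  interpret vec_space "TYPE(real)" m .
  fix y assume y: "y \<in> carrier_vec n" and Oy: "Ob *\<^sub>v y = 0\<^sub>v m" and y0: "y \<noteq> 0\<^sub>v n"
  show False
  proof (cases "distinct (cols Ob)")
    case True
    then have "lin_indpt (set (cols Ob))" using full_rank_lin_indpt[OF Ob r] by auto
    then show False using lin_depI[OF Ob y y0 Oy True] by blast
  next
    case False
    obtain S where S: "maximal S (\<lambda>T. T \<subseteq> set (cols Ob) \<and> lin_indpt T)"
      using maximal_exists[of "(\<lambda>T. T \<subseteq> set (cols Ob) \<and> lin_indpt T)" "card (set (cols Ob))" "{}"]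
      by (meson List.finite_set card_mono empty_iff empty_subsetI finite_lin_indpt2 rev_finite_subset)
    then have "card S \<le> card (set (cols Ob))" by (simp add: card_mono maximal_def)
    moreover have "card (set (cols Ob)) < length (cols Ob)" using False
      by (metis card_distinct card_length le_neq_implies_less)
    moreover have "length (cols Ob) = n" using Ob by auto
    ultimately have "card S < n" by simp
    then show False using rank_card_indpt[OF Ob S] r by simp
  qed
qed

lemma pd_inv: fixes S :: "real mat"
  assumes S: "S \<in> carrier_mat n n" and pd: "pd_mat S"
  shows "minv S \<in> carrier_mat n n \<and> S * minv S = 1\<^sub>m n \<and> minv S * S = 1\<^sub>m n \<and>
    transpose_mat (minv S) = minv S \<and> pd_mat (minv S)"
proof -
  from minv_props[OF S pd_inj[OF S pd]] have Si: "minv S \<in> carrier_mat n n"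
    and SSi: "S * minv S = 1\<^sub>m n" and SiS: "minv S * S = 1\<^sub>m n" by auto
  have ST: "transpose_mat S = S" using pd_matD(1)[OF pd S] .
  have SiT': "transpose_mat (minv S) \<in> carrier_mat n n" using Si by auto
  have "transpose_mat (minv S) * S = 1\<^sub>m n"
    using arg_cong[OF SSi, of transpose_mat] transpose_mult[OF S Si] ST by simp
  hence SiT: "transpose_mat (minv S) = minv S"
    using assoc_mult_mat[OF SiT' S Si] SSi Si SiT' by simp
  have "pd_mat (minv S)" unfolding pd_mat_def
  proof (intro conjI ballI impI)
    show "minv S \<in> carrier_mat (dim_row (minv S)) (dim_row (minv S))" using Si by auto
    show "transpose_mat (minv S) = minv S" by fact
    fix x :: "real vec" assume x: "x \<in> carrier_vec (dim_row (minv S))" and x0: "x \<noteq> 0\<^sub>v (dim_row (minv S))"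
    hence x: "x \<in> carrier_vec n" and x0: "x \<noteq> 0\<^sub>v n" using Si by auto
    define z where "z = minv S *\<^sub>v x"
    have z: "z \<in> carrier_vec n" unfolding z_def using Si x by auto
    have Sz: "S *\<^sub>v z = x" unfolding z_def using assoc_mult_mat_vec[OF S Si x] SSi x by simp
    have z0: "z \<noteq> 0\<^sub>v n"
    proof
      assume "z = 0\<^sub>v n"
      moreover have "S *\<^sub>v 0\<^sub>v n = 0\<^sub>v n" using S by (intro eq_vecI) auto
      ultimately show False using Sz x0 by metis
    qed
    have SiSz: "minv S *\<^sub>v (S *\<^sub>v z) = z" using assoc_mult_mat_vec[OF Si S z] SiS z by simp
    have "x \<bullet> (minv S *\<^sub>v x) = (S *\<^sub>v z) \<bullet> z" unfolding Sz[symmetric] SiSz ..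
    also have "\<dots> = z \<bullet> (S *\<^sub>v z)" by (rule comm_scalar_prod[of _ n]) (insert S z, auto)
    finally have "x \<bullet> (minv S *\<^sub>v x) = z \<bullet> (S *\<^sub>v z)" .
    thus "0 < x \<bullet> (minv S *\<^sub>v x)" using pd_matD(2)[OF pd S z z0] by simp
  qed
  with Si SSi SiS SiT show ?thesis by auto
qed

lemma qf_add: fixes A B :: "real mat"
  assumes "A \<in> carrier_mat m m" "B \<in> carrier_mat m m" "x \<in> carrier_vec m"
  shows "x \<bullet> ((A + B) *\<^sub>v x) = x \<bullet> (A *\<^sub>v x) + x \<bullet> (B *\<^sub>v x)"
  using assms by (simp add: add_mult_distrib_mat_vec scalar_prod_add_distrib[of _ m])

lemma qf_minus: fixes A B :: "real mat"
  assumes "A \<in> carrier_mat m m" "B \<in> carrier_mat m m" "x \<in> carrier_vec m"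
  shows "x \<bullet> ((A - B) *\<^sub>v x) = x \<bullet> (A *\<^sub>v x) - x \<bullet> (B *\<^sub>v x)"
  using assms by (simp add: minus_mult_distrib_mat_vec scalar_prod_minus_distrib[of _ m])

lemma smult_mat_vec: fixes A :: "real mat"
  assumes "A \<in> carrier_mat m k" "x \<in> carrier_vec k"
  shows "(c \<cdot>\<^sub>m A) *\<^sub>v x = c \<cdot>\<^sub>v (A *\<^sub>v x)"
  using assms by (intro eq_vecI) (auto simp: smult_scalar_prod_distrib[of _ k])

lemma qf_smult: fixes A :: "real mat"
  assumes "A \<in> carrier_mat m m" "x \<in> carrier_vec m"
  shows "x \<bullet> ((c \<cdot>\<^sub>m A) *\<^sub>v x) = c * (x \<bullet> (A *\<^sub>v x))"
  using assms by (simp add: smult_mat_vec scalar_prod_smult_distrib[of _ m])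

lemma qf_conj: fixes A B :: "real mat"
  assumes A: "A \<in> carrier_mat m m" and B: "B \<in> carrier_mat m m" and BT: "transpose_mat B = B"
    and x: "x \<in> carrier_vec m"
  shows "x \<bullet> ((B * A * B) *\<^sub>v x) = (B *\<^sub>v x) \<bullet> (A *\<^sub>v (B *\<^sub>v x))"
proof -
  have "(B * A * B) *\<^sub>v x = B *\<^sub>v (A *\<^sub>v (B *\<^sub>v x))" using A B x
    by (simp add: assoc_mult_mat_vec[of _ m m _ m])
  moreover have "x \<bullet> (B *\<^sub>v (A *\<^sub>v (B *\<^sub>v x))) = (transpose_mat B *\<^sub>v x) \<bullet> (A *\<^sub>v (B *\<^sub>v x))"
    using transpose_vec_mult_scalar[OF B _ x, of "A *\<^sub>v (B *\<^sub>v x)"] A B x by simp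
  ultimately show ?thesis using BT by simp
qed

lemma qf_gram: fixes N :: "real mat"
  assumes N: "N \<in> carrier_mat k m" and x: "x \<in> carrier_vec m"
  shows "x \<bullet> ((transpose_mat N * N) *\<^sub>v x) = (N *\<^sub>v x) \<bullet> (N *\<^sub>v x)"
proof -
  have NT: "transpose_mat N \<in> carrier_mat m k" using N by auto
  have "x \<bullet> ((transpose_mat N * N) *\<^sub>v x) = x \<bullet> (transpose_mat N *\<^sub>v (N *\<^sub>v x))"
    using assoc_mult_mat_vec[OF NT N x] by simp
  also have "\<dots> = (transpose_mat (transpose_mat N) *\<^sub>v x) \<bullet> (N *\<^sub>v x)"
    using transpose_vec_mult_scalar[OF NT _ x, of "N *\<^sub>v x"] N x by simp
  finally show ?thesis by simp
qed

lemma transpose_smult_mat: "transpose_mat (c \<cdot>\<^sub>m A) = c \<cdot>\<^sub>m transpose_mat A"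
  by (intro eq_matI) auto

lemma sym_conj: fixes A B :: "real mat"
  assumes A: "A \<in> carrier_mat m m" and B: "B \<in> carrier_mat m m" and AT: "transpose_mat A = A"
    and BT: "transpose_mat B = B"
  shows "transpose_mat (B * A * B) = B * A * B"
proof -
  have BA: "B * A \<in> carrier_mat m m" using A B by auto
  have "transpose_mat (B * A * B) = transpose_mat B * transpose_mat (B * A)" using transpose_mult[OF BA B] .
  also have "transpose_mat (B * A) = transpose_mat A * transpose_mat B" using transpose_mult[OF B A] .
  finally show ?thesis unfolding AT BT using A B by (simp add: assoc_mult_mat[of _ m m _ m _ m])
qed

theorem theorem7:
  fixes A C Sigma_v :: "real mat" and n p K :: nat
  assumes "0 < n"
    and "A \<in> carrier_mat n n" and "C \<in> carrier_mat p n"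
    and "vec_space.rank (p * K) (obs_mat A C K) = n"
    and "Sigma_v \<in> carrier_mat n n" and "pd_mat Sigma_v"
  shows
    "let Ok = obs_mat A C K;
         Wo = transpose_mat Ok * Ok;
         M = Ok * minv Wo * transpose_mat Ok;
         N = pd_sqrt (minv Sigma_v) * minv Wo * transpose_mat Ok;
         feasible = (\<lambda>\<beta>::real. 0 < \<beta> \<and> (\<exists>R \<in> carrier_mat (p * K) (p * K).
                        psd_ge (transpose_mat N * N + R - M * R * M) \<beta>));
         \<beta>opt = lambda_min (minv Sigma_v * minv Wo)
     in feasible \<beta>opt \<and> (\<forall>\<beta>. feasible \<beta> \<longrightarrow> \<beta> \<le> \<beta>opt)"
proof -
  note n = assms(1)
  define m where "m = p * K"
  define Ob where "Ob = obs_mat A C K"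
  have Ob: "Ob \<in> carrier_mat m n" unfolding Ob_def obs_mat_def m_def using assms(3) by auto
  have ObT: "transpose_mat Ob \<in> carrier_mat n m" using Ob by auto
  have Oinj: "\<And>y. y \<in> carrier_vec n \<Longrightarrow> Ob *\<^sub>v y = 0\<^sub>v m \<Longrightarrow> y = 0\<^sub>v n"
    using rank_inj[OF Ob] assms(4) unfolding Ob_def m_def by blast
  define W where "W = transpose_mat Ob * Ob"
  have W: "W \<in> carrier_mat n n" unfolding W_def using Ob by auto
  have Wpd: "pd_mat W" unfolding pd_mat_def
  proof (intro conjI ballI impI)
    show "W \<in> carrier_mat (dim_row W) (dim_row W)" using W by auto
    show "transpose_mat W = W" unfolding W_def using transpose_mult[OF ObT Ob] by simp
    fix x :: "real vec" assume x: "x \<in> carrier_vec (dim_row W)" and x0: "x \<noteq> 0\<^sub>v (dim_row W)"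
    hence x: "x \<in> carrier_vec n" and x0: "x \<noteq> 0\<^sub>v n" using W by auto
    have "Ob *\<^sub>v x \<noteq> 0\<^sub>v m" using Oinj[OF x] x0 by blast
    moreover have "Ob *\<^sub>v x \<in> carrier_vec m" using Ob x by auto
    ultimately show "0 < x \<bullet> (W *\<^sub>v x)" unfolding W_def qf_gram[OF Ob x] using sq_pos_vec by blast
  qed
  define Wi where "Wi = minv W"
  from pd_inv[OF W Wpd, folded Wi_def] have Wi: "Wi \<in> carrier_mat n n" and WWi: "W * Wi = 1\<^sub>m n"
    and WiW: "Wi * W = 1\<^sub>m n" and WiT: "transpose_mat Wi = Wi" by auto
  define Si where "Si = minv Sigma_v"
  from pd_inv[OF assms(5,6), folded Si_def] have Si: "Si \<in> carrier_mat n n"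
    and SiT: "transpose_mat Si = Si" and Sipd: "pd_mat Si" by auto
  define R where "R = pd_sqrt Si"
  from pd_sqrt_props[OF Si Sipd, folded R_def] have R: "R \<in> carrier_mat n n" and Rpd: "pd_mat R"
    and RR: "R * R = Si" by auto
  have RT: "transpose_mat R = R" using pd_matD(1)[OF Rpd R] .
  define M where "M = Ob * Wi * transpose_mat Ob"
  define N where "N = R * Wi * transpose_mat Ob"
  have M: "M \<in> carrier_mat m m" unfolding M_def using Ob Wi by auto
  have N: "N \<in> carrier_mat n m" unfolding N_def using Ob Wi R by auto
  have NN: "transpose_mat N * N \<in> carrier_mat m m" using N by auto
  have MT: "transpose_mat M = M"
  proof -
    have OW: "Ob * Wi \<in> carrier_mat m n" using Ob Wi by auto
    have "transpose_mat M = transpose_mat (transpose_mat Ob) * transpose_mat (Ob * Wi)"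
      unfolding M_def using transpose_mult[OF OW ObT] .
    also have "transpose_mat (Ob * Wi) = transpose_mat Wi * transpose_mat Ob" using transpose_mult[OF Ob Wi] .
    finally show ?thesis unfolding WiT M_def using Ob Wi by (simp add: assoc_mult_mat[of _ m n _ n _ m])
  qed
  define mu where "mu = lambda_min (Si * Wi)"
  from gen_eig[OF W Wpd Si SiT n, folded Wi_def]
  have low: "\<And>y. y \<in> carrier_vec n \<Longrightarrow> mu * (y \<bullet> (W *\<^sub>v y)) \<le> y \<bullet> (Si *\<^sub>v y)"
    and "\<exists>y\<in>carrier_vec n. y \<noteq> 0\<^sub>v n \<and> y \<bullet> (Si *\<^sub>v y) = mu * (y \<bullet> (W *\<^sub>v y))" unfolding mu_def by auto
  then obtain y0 where y0: "y0 \<in> carrier_vec n" "y0 \<noteq> 0\<^sub>v n" and y0eq: "y0 \<bullet> (Si *\<^sub>v y0) = mu * (y0 \<bullet> (W *\<^sub>v y0))"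
    by blast
  have Wy0: "0 < y0 \<bullet> (W *\<^sub>v y0)" using pd_matD(2)[OF Wpd W y0] .
  have Sy0: "0 < y0 \<bullet> (Si *\<^sub>v y0)" using pd_matD(2)[OF Sipd Si y0] .
  have mupos: "0 < mu" using Wy0 Sy0 y0eq by (metis zero_less_mult_pos2)
  have I1: "x \<bullet> ((transpose_mat N * N) *\<^sub>v x) = (Wi *\<^sub>v (transpose_mat Ob *\<^sub>v x)) \<bullet> (Si *\<^sub>v (Wi *\<^sub>v (transpose_mat Ob *\<^sub>v x)))"
    if x: "x \<in> carrier_vec m" for x
  proof -
    define y where "y = Wi *\<^sub>v (transpose_mat Ob *\<^sub>v x)"
    have y: "y \<in> carrier_vec n" unfolding y_def using Wi ObT x by auto
    have Nx: "N *\<^sub>v x = R *\<^sub>v y" unfolding N_def y_def using R Wi ObT x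
      by (simp add: assoc_mult_mat_vec[of _ n n _ m] assoc_mult_mat_vec[of _ n n _ n])
    have "x \<bullet> ((transpose_mat N * N) *\<^sub>v x) = (R *\<^sub>v y) \<bullet> (R *\<^sub>v y)" unfolding qf_gram[OF N x] Nx ..
    also have "\<dots> = y \<bullet> ((transpose_mat R * R) *\<^sub>v y)" using qf_gram[OF R y] by simp
    finally show ?thesis unfolding RT RR y_def .
  qed
  have I2: "x \<bullet> (M *\<^sub>v x) = (Wi *\<^sub>v (transpose_mat Ob *\<^sub>v x)) \<bullet> (W *\<^sub>v (Wi *\<^sub>v (transpose_mat Ob *\<^sub>v x)))"
    if x: "x \<in> carrier_vec m" for x
  proof -
    define w where "w = transpose_mat Ob *\<^sub>v x"
    have w: "w \<in> carrier_vec n" unfolding w_def using ObT x by auto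
    have "x \<bullet> (M *\<^sub>v x) = x \<bullet> (Ob *\<^sub>v (Wi *\<^sub>v w))" unfolding M_def w_def using Ob Wi ObT x
      by (simp add: assoc_mult_mat_vec[of _ m n _ n] assoc_mult_mat_vec[of _ m n _ m])
    also have "\<dots> = w \<bullet> (Wi *\<^sub>v w)"
      using transpose_vec_mult_scalar[OF Ob _ x, of "Wi *\<^sub>v w"] Wi w by (simp add: w_def[symmetric])
    also have "\<dots> = (Wi *\<^sub>v w) \<bullet> w" by (rule comm_scalar_prod[of _ n]) (insert Wi w, auto)
    also have "W *\<^sub>v (Wi *\<^sub>v w) = w" using assoc_mult_mat_vec[OF W Wi w] WWi w by simp
    hence "(Wi *\<^sub>v w) \<bullet> w = (Wi *\<^sub>v w) \<bullet> (W *\<^sub>v (Wi *\<^sub>v w))" by simp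
    finally show ?thesis unfolding w_def .
  qed
  have I3: "M *\<^sub>v (Ob *\<^sub>v y) = Ob *\<^sub>v y" and I4: "Wi *\<^sub>v (transpose_mat Ob *\<^sub>v (Ob *\<^sub>v y)) = y"
    if y: "y \<in> carrier_vec n" for y
  proof -
    have "transpose_mat Ob *\<^sub>v (Ob *\<^sub>v y) = W *\<^sub>v y" unfolding W_def using assoc_mult_mat_vec[OF ObT Ob y] ..
    moreover have "Wi *\<^sub>v (W *\<^sub>v y) = y" using assoc_mult_mat_vec[OF Wi W y] WiW y by simp
    ultimately show I4: "Wi *\<^sub>v (transpose_mat Ob *\<^sub>v (Ob *\<^sub>v y)) = y" by simp
    have "M *\<^sub>v (Ob *\<^sub>v y) = Ob *\<^sub>v (Wi *\<^sub>v (transpose_mat Ob *\<^sub>v (Ob *\<^sub>v y)))" unfolding M_def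
      using Ob Wi ObT y by (simp add: assoc_mult_mat_vec[of _ m n _ n] assoc_mult_mat_vec[of _ m n _ m])
    thus "M *\<^sub>v (Ob *\<^sub>v y) = Ob *\<^sub>v y" unfolding I4 .
  qed
  have MM: "M *\<^sub>v (M *\<^sub>v x) = M *\<^sub>v x" if x: "x \<in> carrier_vec m" for x
  proof -
    define y where "y = Wi *\<^sub>v (transpose_mat Ob *\<^sub>v x)"
    have y: "y \<in> carrier_vec n" unfolding y_def using Wi ObT x by auto
    have "M *\<^sub>v x = Ob *\<^sub>v y" unfolding M_def y_def using Ob Wi ObT x
      by (simp add: assoc_mult_mat_vec[of _ m n _ n] assoc_mult_mat_vec[of _ m n _ m])
    thus ?thesis using I3[OF y] by simp
  qed
  have expand: "x \<bullet> ((transpose_mat N * N + R0 - M * R0 * M - b \<cdot>\<^sub>m 1\<^sub>m m) *\<^sub>v x)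
     = x \<bullet> ((transpose_mat N * N) *\<^sub>v x) + x \<bullet> (R0 *\<^sub>v x) - (M *\<^sub>v x) \<bullet> (R0 *\<^sub>v (M *\<^sub>v x)) - b * (x \<bullet> x)"
    if x: "x \<in> carrier_vec m" and R0: "R0 \<in> carrier_mat m m" for x R0 b
  proof -
    have MRM: "M * R0 * M \<in> carrier_mat m m" using M R0 by auto
    have s1: "transpose_mat N * N + R0 \<in> carrier_mat m m" using NN R0 by auto
    have s2: "transpose_mat N * N + R0 - M * R0 * M \<in> carrier_mat m m" by (rule minus_carrier_mat[OF MRM])
    have sm: "b \<cdot>\<^sub>m 1\<^sub>m m \<in> carrier_mat m m" by auto
    show ?thesis
      unfolding qf_minus[OF s2 sm x] qf_minus[OF s1 MRM x] qf_add[OF NN R0 x] qf_smult[OF one_carrier_mat x]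
        qf_conj[OF R0 M MT x] using x by simp
  qed
  define feasible where "feasible = (\<lambda>\<beta>::real. 0 < \<beta> \<and> (\<exists>R0 \<in> carrier_mat m m.
                        psd_ge (transpose_mat N * N + R0 - M * R0 * M) \<beta>))"
  have dimY: "dim_row (transpose_mat N * N + R0 - M * R0 * M) = m" if "R0 \<in> carrier_mat m m" for R0
    using that M by simp
  have feas: "feasible mu"
    unfolding feasible_def
  proof (intro conjI bexI)
    show "0 < mu" by fact
    define R0 where "R0 = mu \<cdot>\<^sub>m (1\<^sub>m m - M)"
    show R0: "R0 \<in> carrier_mat m m" unfolding R0_def using M by auto
    have R0T: "transpose_mat R0 = R0" unfolding R0_def transpose_smult_mat
      using transpose_minus[OF one_carrier_mat M] MT by simp
    define Z where "Z = transpose_mat N * N + R0 - M * R0 * M - mu \<cdot>\<^sub>m 1\<^sub>m m"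
    have Z: "Z \<in> carrier_mat m m" unfolding Z_def by (intro minus_carrier_mat) auto
    have NNT: "transpose_mat (transpose_mat N * N) = transpose_mat N * N"
      using transpose_mult[of "transpose_mat N" m n N m] N by simp
    have MRMT: "transpose_mat (M * R0 * M) = M * R0 * M" by (rule sym_conj[OF R0 M R0T MT])
    have c1: "transpose_mat N * N + R0 \<in> carrier_mat m m" using NN R0 by auto
    have MRMc: "M * R0 * M \<in> carrier_mat m m" using M R0 by auto
    have c2: "transpose_mat N * N + R0 - M * R0 * M \<in> carrier_mat m m" by (rule minus_carrier_mat[OF MRMc])
    have sm: "mu \<cdot>\<^sub>m 1\<^sub>m m \<in> carrier_mat m m" by auto
    have ZT: "transpose_mat Z = Z" unfolding Z_def transpose_minus[OF c2 sm] transpose_minus[OF c1 MRMc]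
      transpose_add[OF NN R0] NNT R0T MRMT transpose_smult_mat transpose_one ..
    have "psd_mat Z" unfolding psd_mat_def
    proof (intro conjI ballI)
      show "Z \<in> carrier_mat (dim_row Z) (dim_row Z)" using Z by auto
      show "transpose_mat Z = Z" by fact
      fix x :: "real vec" assume "x \<in> carrier_vec (dim_row Z)"
      hence x: "x \<in> carrier_vec m" using Z by auto
      have Mx: "M *\<^sub>v x \<in> carrier_vec m" using M x by auto
      define y where "y = Wi *\<^sub>v (transpose_mat Ob *\<^sub>v x)"
      have y: "y \<in> carrier_vec n" unfolding y_def using Wi ObT x by auto
      have r0: "v \<bullet> (R0 *\<^sub>v v) = mu * (v \<bullet> v - v \<bullet> (M *\<^sub>v v))" if v: "v \<in> carrier_vec m" for v
        unfolding R0_def qf_smult[OF minus_carrier_mat[OF M] v] qf_minus[OF one_carrier_mat M v] using v by simp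
      have "(M *\<^sub>v x) \<bullet> (R0 *\<^sub>v (M *\<^sub>v x)) = 0" unfolding r0[OF Mx] MM[OF x] by simp
      hence "x \<bullet> (Z *\<^sub>v x) = y \<bullet> (Si *\<^sub>v y) - mu * (y \<bullet> (W *\<^sub>v y))"
        unfolding Z_def expand[OF x R0] r0[OF x] I1[OF x, folded y_def] I2[OF x, folded y_def]
        by (simp add: algebra_simps)
      thus "0 \<le> x \<bullet> (Z *\<^sub>v x)" using low[OF y] by simp
    qed
    thus "psd_ge (transpose_mat N * N + R0 - M * R0 * M) mu" unfolding psd_ge_def dimY[OF R0] Z_def .
  qed
  have opt: "\<beta> \<le> mu" if "feasible \<beta>" for \<beta>
  proof -
    from that obtain R0 where R0: "R0 \<in> carrier_mat m m" and
      ps: "psd_mat (transpose_mat N * N + R0 - M * R0 * M - \<beta> \<cdot>\<^sub>m 1\<^sub>m m)"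
      unfolding feasible_def psd_ge_def using dimY by auto
    define x where "x = Ob *\<^sub>v y0"
    have x: "x \<in> carrier_vec m" unfolding x_def using Ob y0 by auto
    have Z: "transpose_mat N * N + R0 - M * R0 * M - \<beta> \<cdot>\<^sub>m 1\<^sub>m m \<in> carrier_mat m m" by (intro minus_carrier_mat) auto
    from ps x Z have "0 \<le> x \<bullet> ((transpose_mat N * N + R0 - M * R0 * M - \<beta> \<cdot>\<^sub>m 1\<^sub>m m) *\<^sub>v x)"
      unfolding psd_mat_def by auto
    also have "\<dots> = y0 \<bullet> (Si *\<^sub>v y0) - \<beta> * (y0 \<bullet> (W *\<^sub>v y0))"
    proof -
      have "x \<bullet> x = y0 \<bullet> (W *\<^sub>v y0)" unfolding x_def W_def using qf_gram[OF Ob y0(1)] by simp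
      thus ?thesis unfolding expand[OF x R0] I1[OF x] unfolding x_def I3[OF y0(1)] I4[OF y0(1)] by simp
    qed
    finally have "\<beta> * (y0 \<bullet> (W *\<^sub>v y0)) \<le> mu * (y0 \<bullet> (W *\<^sub>v y0))" using y0eq by simp
    thus ?thesis using Wy0 by simp
  qed
  show ?thesis unfolding Let_def
    unfolding Ob_def[symmetric] W_def[symmetric] Wi_def[symmetric] Si_def[symmetric] R_def[symmetric]
      M_def[symmetric] N_def[symmetric] mu_def[symmetric] m_def[symmetric]
    using feas opt unfolding feasible_def by blast
qed


end
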